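(* Let $L\cong\mathbf{2}^n$ be a Boolean lattice and let $R_L\cong\prod_{1}^{n}\mathbb{Z}_2$ be the Boolean ring associated with $L$ (multiplication corresponding to meet). Then $\mathrm{Incomp}(L)=AG(R_L)$.
   Context: For a bounded lattice $L$, the incomparability graph $\mathrm{Incomp}(L)$ has vertex set $L\setminus\{0,1\}$, with distinct $a,b$ adjacent iff $a$ and $b$ are incomparable. For a commutative ring $R$ with identity, $\mathrm{ann}(a)=\{x\in R: xa=0\}$, $Z(R)$ is the set of zero-divisors, and the annihilator graph $AG(R)$ has vertex set $Z(R)\setminus\{0\}$, with distinct $x,y$ adjacent iff $\mathrm{ann}(xy)\neq\mathrm{ann}(x)\cup\mathrm{ann}(y)$. The Boolean ring $R_L$ has underlying set $L$ with product $ab=a\wedge b$ (and sum the symmetric difference), so $\mathrm{ann}(a)$ is the principal ideal generated by the complement of $a$. *)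

theory Defs
  imports Main "HOL-Algebra.Ring"
begin

text \<open>Simple graphs are represented as a pair (vertex set, adjacency relation),
  where the adjacency relation only relates distinct vertices of the vertex set.\<close>

definition Incomp :: "('a::bounded_lattice) set \<times> ('a \<Rightarrow> 'a \<Rightarrow> bool)" where
  "Incomp = (UNIV - {bot, Orderings.top},
     (\<lambda>a b. a \<in> UNIV - {bot, Orderings.top} \<and> b \<in> UNIV - {bot, Orderings.top} \<and> a \<noteq> b
            \<and> \<not> a \<le> b \<and> \<not> b \<le> a))"

definition ann :: "('a, 'b) ring_scheme \<Rightarrow> 'a \<Rightarrow> 'a set" where
  "ann R a = {x \<in> carrier R. x \<otimes>\<^bsub>R\<^esub> a = \<zero>\<^bsub>R\<^esub>}"

definition zero_divisors :: "('a, 'b) ring_scheme \<Rightarrow> 'a set" where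
  "zero_divisors R = {x \<in> carrier R. \<exists>y \<in> carrier R. y \<noteq> \<zero>\<^bsub>R\<^esub> \<and> x \<otimes>\<^bsub>R\<^esub> y = \<zero>\<^bsub>R\<^esub>}"

definition AG :: "('a, 'b) ring_scheme \<Rightarrow> 'a set \<times> ('a \<Rightarrow> 'a \<Rightarrow> bool)" where
  "AG R = (zero_divisors R - {\<zero>\<^bsub>R\<^esub>},
     (\<lambda>x y. x \<in> zero_divisors R - {\<zero>\<^bsub>R\<^esub>} \<and> y \<in> zero_divisors R - {\<zero>\<^bsub>R\<^esub>} \<and> x \<noteq> y
            \<and> ann R (x \<otimes>\<^bsub>R\<^esub> y) \<noteq> ann R x \<union> ann R y))"

definition boolean_ring :: "('a::boolean_algebra) ring" where
  "boolean_ring = \<lparr>carrier = UNIV, mult = inf, one = Orderings.top,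
      zero = bot, add = (\<lambda>x y. sup (inf x (- y)) (inf (- x) y))\<rparr>"

end

theory Submission
  imports Defs
begin

lemma zd_iff: "zero_divisors (boolean_ring :: ('a::boolean_algebra) ring) = UNIV - {Orderings.top}"
proof -
  have "x \<in> zero_divisors (boolean_ring :: 'a ring) \<longleftrightarrow> x \<noteq> Orderings.top" for x :: 'a
  proof
    assume "x \<in> zero_divisors (boolean_ring :: 'a ring)"
    then obtain y :: 'a where "y \<noteq> bot" "inf x y = bot"
      by (auto simp: zero_divisors_def boolean_ring_def)
    then show "x \<noteq> Orderings.top" by auto
  next
    assume "x \<noteq> Orderings.top"
    then have "- x \<noteq> bot" by (metis compl_bot_eq double_compl)
    then show "x \<in> zero_divisors (boolean_ring :: 'a ring)"
      by (auto simp: zero_divisors_def boolean_ring_def intro!: bexI[of _ "- x"])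
  qed
  then show ?thesis by auto
qed

lemma ann_eq: "ann (boolean_ring :: ('a::boolean_algebra) ring) x = {z. z \<le> - x}"
  unfolding ann_def boolean_ring_def by (simp add: inf_shunt)

lemma adj_iff:
  fixes x y :: "'a::boolean_algebra"
  shows "(ann (boolean_ring :: 'a ring) (x \<otimes>\<^bsub>boolean_ring\<^esub> y) = ann boolean_ring x \<union> ann boolean_ring y)
         \<longleftrightarrow> (x \<le> y \<or> y \<le> x)"
proof -
  have m: "x \<otimes>\<^bsub>(boolean_ring :: 'a ring)\<^esub> y = inf x y" by (simp add: boolean_ring_def)
  have "{z. z \<le> - inf x y} = {z. z \<le> - x} \<union> {z. z \<le> - y} \<longleftrightarrow> (x \<le> y \<or> y \<le> x)"
  proof
    assume h: "{z. z \<le> - inf x y} = {z. z \<le> - x} \<union> {z. z \<le> - y}"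
    have "sup (- x) (- y) \<in> {z. z \<le> - inf x y}" by simp
    then have "sup (- x) (- y) \<le> - x \<or> sup (- x) (- y) \<le> - y" using h by blast
    then show "x \<le> y \<or> y \<le> x"
      by simp
  next
    assume "x \<le> y \<or> y \<le> x"
    then show "{z. z \<le> - inf x y} = {z. z \<le> - x} \<union> {z. z \<le> - y}"
    proof
      assume h: "x \<le> y"
      then have e: "inf x y = x" by (rule inf_absorb1)
      have c: "- y \<le> - x" using h by simp
      have "z \<le> - x" if "z \<le> - y" for z using order_trans[OF that c] .
      then show ?thesis unfolding e by blast
    next
      assume h: "y \<le> x"
      then have e: "inf x y = y" by (rule inf_absorb2)
      have c: "- x \<le> - y" using h by simp
      have "z \<le> - y" if "z \<le> - x" for z using order_trans[OF that c] .
      then show ?thesis unfolding e by blast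
    qed
  qed
  then show ?thesis unfolding m ann_eq .
qed

theorem mainTheorem9:
  shows "(Incomp :: ('a::{finite, boolean_algebra}) set \<times> ('a \<Rightarrow> 'a \<Rightarrow> bool))
           = AG (boolean_ring :: 'a ring)"
proof -
  have z: "\<zero>\<^bsub>(boolean_ring :: 'a ring)\<^esub> = bot" by (simp add: boolean_ring_def)
  have V: "zero_divisors (boolean_ring :: 'a ring) - {\<zero>\<^bsub>(boolean_ring :: 'a ring)\<^esub>} = UNIV - {bot, Orderings.top}"
    by (auto simp: zd_iff z)
  show ?thesis
    unfolding Incomp_def AG_def V
    unfolding adj_iff by simp
qed

end
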